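(* Let $p\in(0,1)$, $x\geq1$, and let $(\xi_n)_{n\geq1}$ be i.i.d. with $\mathbf{P}(\xi_1=1)=p=1-\mathbf{P}(\xi_1=-1)$. Set $W_0:=x$, $B_1:=1$, $W_n:=W_{n-1}+\xi_nB_n$, $B_{n+1}:=B_n2^{\xi_n}$ for $n\geq1$, and $Y_n:=W_n/B_{n+1}$ for $n\in\mathbb{N}$. Then almost surely on the event $\{Y_k\leq2\text{ for some }k\in\mathbb{N}\}$, there exists $n$ with $W_n\leq0$ (the gambler eventually goes bankrupt). *)

theory Defs
  imports "HOL-Probability.Probability"
begin

text \<open>Betting strategy along a fixed sample path xi (xi n for n >= 1).
  bet xi n = B_n for n >= 1; B_1 = 1, B_(n+1) = B_n * 2 powr (xi n).
  The value at index 0 is an unused convention.\<close>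
primrec bet :: "(nat \<Rightarrow> real) \<Rightarrow> nat \<Rightarrow> real" where
  "bet xi 0 = 1"
| "bet xi (Suc n) = (if n = 0 then 1 else bet xi n * 2 powr (xi n))"

primrec wealth :: "real \<Rightarrow> (nat \<Rightarrow> real) \<Rightarrow> nat \<Rightarrow> real" where
  "wealth x xi 0 = x"
| "wealth x xi (Suc n) = wealth x xi n + xi (Suc n) * bet xi (Suc n)"

definition ratioY :: "real \<Rightarrow> (nat \<Rightarrow> real) \<Rightarrow> nat \<Rightarrow> real" where
  "ratioY x xi n = wealth x xi n / bet xi (Suc n)"

end

theory Submission
  imports Defs
begin
lemma bet_pos: "bet xi n > 0"
  by (induction n) auto

lemma ratioY_step:
  "ratioY x xi (Suc n) = (ratioY x xi n + xi (Suc n)) / 2 powr (xi (Suc n))"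
  using bet_pos[of xi "Suc n"]
  by (simp add: ratioY_def field_simps)

lemma Y_le2:
  assumes pm: "\<And>n. n \<ge> 1 \<Longrightarrow> xi n = 1 \<or> xi n = -1" and k: "ratioY x xi k \<le> 2"
  shows "n \<ge> k \<Longrightarrow> ratioY x xi n \<le> 2"
proof (induction n rule: dec_induct[where i=k, case_names base step, consumes 1])
  case base show ?case using k .
next
  case (step m)
  from pm[of "Suc m"] have "xi (Suc m) = 1 \<or> xi (Suc m) = -1" by simp
  then show ?case using step.IH
    by (auto simp: ratioY_step powr_minus_divide)
qed

lemma bankrupt:
  assumes pm: "\<And>n. n \<ge> 1 \<Longrightarrow> xi n = 1 \<or> xi n = -1" and k: "ratioY x xi k \<le> 2"
    and mk: "m > k" and p1: "xi m = 1" and p2: "xi (Suc m) = -1" and p3: "xi (Suc (Suc m)) = -1"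
  shows "\<exists>n. wealth x xi n \<le> 0"
proof -
  obtain m' where m': "m = Suc m'" using mk by (cases m) auto
  have "ratioY x xi m' \<le> 2" using Y_le2[OF pm k] mk m' by auto
  hence "ratioY x xi m \<le> 3/2" using m' p1 by (simp add: ratioY_step)
  hence "ratioY x xi (Suc m) \<le> 1" using p2 by (simp add: ratioY_step powr_minus_divide)
  hence "ratioY x xi (Suc (Suc m)) \<le> 0" using p2 p3 by (simp add: ratioY_step powr_minus_divide)
  hence "wealth x xi (Suc (Suc m)) \<le> 0"
    using bet_pos[of xi "Suc (Suc (Suc m))"] by (simp add: ratioY_def divide_le_0_iff)
  thus ?thesis by blast
qed
lemma (in prob_space) pattern_prob:
  fixes \<xi> :: "nat \<Rightarrow> 'a \<Rightarrow> real"
  assumes ind: "indep_vars (\<lambda>_. borel) \<xi> {1..}"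
    and h1: "\<And>n. n \<ge> 1 \<Longrightarrow> prob {\<omega> \<in> space M. \<xi> n \<omega> = 1} = p"
    and h2: "\<And>n. n \<ge> 1 \<Longrightarrow> prob {\<omega> \<in> space M. \<xi> n \<omega> = -1} = 1 - p"
  shows "prob {\<omega> \<in> space M. \<xi> (3*j+1) \<omega> = 1 \<and> \<xi> (3*j+2) \<omega> = -1 \<and> \<xi> (3*j+3) \<omega> = -1}
         = p * (1-p)^2"
proof -
  define c where "c i = (if i = 3*j+1 then {1::real} else {-1})" for i
  have "prob (\<Inter>i\<in>{3*j+1,3*j+2,3*j+3}. \<xi> i -` c i \<inter> space M)
      = (\<Prod>i\<in>{3*j+1,3*j+2,3*j+3}. prob (\<xi> i -` c i \<inter> space M))"
    by (rule indep_varsD[OF ind]) (auto simp: c_def)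
  also have "\<dots> = p * (1-p)^2"
  proof -
    have e: "\<xi> i -` {a} \<inter> space M = {\<omega> \<in> space M. \<xi> i \<omega> = a}" for i a by auto
    show ?thesis using h1[of "3*j+1"] h2[of "3*j+2"] h2[of "3*j+3"]
      by (simp add: c_def e power2_eq_square)
  qed
  also have "(\<Inter>i\<in>{3*j+1,3*j+2,3*j+3}. \<xi> i -` c i \<inter> space M) =
     {\<omega> \<in> space M. \<xi> (3*j+1) \<omega> = 1 \<and> \<xi> (3*j+2) \<omega> = -1 \<and> \<xi> (3*j+3) \<omega> = -1}"
    by (auto simp: c_def)
  finally show ?thesis .
qed

lemma (in prob_space) block_indep:
  fixes \<xi> :: "nat \<Rightarrow> 'a \<Rightarrow> real"
  assumes ind: "indep_vars (\<lambda>_. borel) \<xi> {1..}"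
    and fin: "finite J" "J \<noteq> {}"
  shows "prob (\<Inter>j\<in>J. {\<omega> \<in> space M. \<not> (\<xi> (3*j+1) \<omega> = 1 \<and> \<xi> (3*j+2) \<omega> = -1 \<and> \<xi> (3*j+3) \<omega> = -1)})
       = (\<Prod>j\<in>J. prob {\<omega> \<in> space M. \<not> (\<xi> (3*j+1) \<omega> = 1 \<and> \<xi> (3*j+2) \<omega> = -1 \<and> \<xi> (3*j+3) \<omega> = -1)})"
proof -
  define K where "K j = {3*j+1, 3*j+2, 3*j+(3::nat)}" for j
  have Kd: "disjoint_family_on K UNIV"
    unfolding disjoint_family_on_def K_def by auto
  have Ks: "K j \<subseteq> {1..}" for j by (auto simp: K_def)
  have ind2: "indep_vars (\<lambda>j. PiM (K j) (\<lambda>_. borel)) (\<lambda>j \<omega>. restrict (\<lambda>i. \<xi> i \<omega>) (K j)) UNIV"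
    by (rule indep_vars_restrict[OF ind Ks Kd])
  define A where "A j = {f \<in> space (PiM (K j) (\<lambda>_. borel)). \<not> (f (3*j+1) = (1::real) \<and> f (3*j+2) = -1 \<and> f (3*j+3) = -1)}" for j
  have As: "A j \<in> sets (PiM (K j) (\<lambda>_. borel))" for j
  proof -
    have m: "(\<lambda>f. f i) \<in> borel_measurable (PiM (K j) (\<lambda>_. borel))" if "i \<in> K j" for i
      using that by (rule measurable_component_singleton)
    show ?thesis unfolding A_def
      using m[of "3*j+1"] m[of "3*j+2"] m[of "3*j+3"] by (simp add: K_def) measurable
  qed
  have eq: "(\<lambda>\<omega>. restrict (\<lambda>i. \<xi> i \<omega>) (K j)) -` A j \<inter> space M =
     {\<omega> \<in> space M. \<not> (\<xi> (3*j+1) \<omega> = 1 \<and> \<xi> (3*j+2) \<omega> = -1 \<and> \<xi> (3*j+3) \<omega> = -1)}" for j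
    by (auto simp: A_def K_def space_PiM)
  show ?thesis
    using indep_varsD[OF ind2 fin(2) fin(1) subset_UNIV As] by (simp add: eq)
qed

theorem lemma2p1:
  fixes M :: "'a measure" and \<xi> :: "nat \<Rightarrow> 'a \<Rightarrow> real" and p x :: real
  assumes "prob_space M"
    and "0 < p" and "p < 1" and "x \<ge> 1"
    and "\<And>n. \<xi> n \<in> borel_measurable M"
    and "prob_space.indep_vars M (\<lambda>_. borel) \<xi> {1..}"
    and "\<And>n. n \<ge> 1 \<Longrightarrow> measure M {\<omega> \<in> space M. \<xi> n \<omega> = 1} = p"
    and "\<And>n. n \<ge> 1 \<Longrightarrow> measure M {\<omega> \<in> space M. \<xi> n \<omega> = -1} = 1 - p"
  shows "AE \<omega> in M. (\<exists>k. ratioY x (\<lambda>n. \<xi> n \<omega>) k \<le> 2) \<longrightarrow>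
                     (\<exists>n. wealth x (\<lambda>n. \<xi> n \<omega>) n \<le> 0)"
proof -
  interpret prob_space M by fact
  note meas = assms(5)
  note ind = assms(6)
  define pat where "pat j \<omega> \<longleftrightarrow> \<xi> (3*j+1) \<omega> = 1 \<and> \<xi> (3*j+2) \<omega> = -1 \<and> \<xi> (3*j+3) \<omega> = -1" for j \<omega>
  define q where "q = p * (1-p)^2"
  have q: "0 < q" "q < 1" unfolding q_def
  proof -
    have a: "(1-p)^2 \<le> 1" using assms(2,3) by (intro power_le_one) auto
    show "0 < p * (1-p)^2" using assms(2,3) by simp
    have "p * (1-p)^2 \<le> p * 1" using a assms(2) by (intro mult_left_mono) auto
    thus "p * (1-p)^2 < 1" using assms(3) by simp
  qed
  have patev: "{\<omega> \<in> space M. \<not> pat j \<omega>} \<in> events" for j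
    unfolding pat_def using meas by measurable
  have patp: "prob {\<omega> \<in> space M. \<not> pat j \<omega>} = 1 - q" for j
  proof -
    have "{\<omega> \<in> space M. \<not> pat j \<omega>} = space M - {\<omega> \<in> space M. pat j \<omega>}" by auto
    moreover have "{\<omega> \<in> space M. pat j \<omega>} \<in> events" unfolding pat_def using meas by measurable
    ultimately show ?thesis
      using pattern_prob[OF ind assms(7,8), of j] by (simp add: prob_compl pat_def q_def)
  qed
  define E where "E J = {\<omega> \<in> space M. \<forall>j\<ge>J. \<not> pat j \<omega>}" for J
  have Eev: "E J \<in> events" for J
    unfolding E_def pat_def using meas by measurable
  have Ebound: "prob (E J) \<le> (1-q)^(Suc N)" for J N
  proof -
    have "E J \<subseteq> (\<Inter>j\<in>{J..J+N}. {\<omega> \<in> space M. \<not> pat j \<omega>})" by (auto simp: E_def)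
    hence "prob (E J) \<le> prob (\<Inter>j\<in>{J..J+N}. {\<omega> \<in> space M. \<not> pat j \<omega>})"
      by (intro finite_measure_mono) (use patev in auto)
    also have "\<dots> = (\<Prod>j\<in>{J..J+N}. prob {\<omega> \<in> space M. \<not> pat j \<omega>})"
      unfolding pat_def by (rule block_indep[OF ind]) auto
    also have "\<dots> = (1-q)^(Suc N)" by (simp add: patp)
    finally show ?thesis .
  qed
  have E0: "prob (E J) = 0" for J
  proof (rule ccontr)
    assume "prob (E J) \<noteq> 0"
    hence "prob (E J) > 0" using measure_nonneg[of M "E J"] by linarith
    then obtain n where "(1-q)^n < prob (E J)" using real_arch_pow_inv[of "prob (E J)" "1-q"] q by auto
    moreover have "(1-q)^Suc n \<le> (1-q)^n" using q by (simp add: mult_left_le_one_le)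
    ultimately show False using Ebound[of J n] by linarith
  qed
  define F where "F n = {\<omega> \<in> space M. \<xi> n \<omega> \<noteq> 1 \<and> \<xi> n \<omega> \<noteq> -1}" for n
  have Fev: "F n \<in> events" for n unfolding F_def using meas by measurable
  have F0: "prob (F n) = 0" if "n \<ge> 1" for n
  proof -
    have d: "{\<omega> \<in> space M. \<xi> n \<omega> = 1} \<union> {\<omega> \<in> space M. \<xi> n \<omega> = -1} \<union> F n = space M"
      by (auto simp: F_def)
    have "prob ({\<omega> \<in> space M. \<xi> n \<omega> = 1} \<union> {\<omega> \<in> space M. \<xi> n \<omega> = -1} \<union> F n)
        = prob ({\<omega> \<in> space M. \<xi> n \<omega> = 1} \<union> {\<omega> \<in> space M. \<xi> n \<omega> = -1}) + prob (F n)"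
      by (rule finite_measure_Union) (use meas Fev in \<open>auto simp: F_def\<close>)
    also have "prob ({\<omega> \<in> space M. \<xi> n \<omega> = 1} \<union> {\<omega> \<in> space M. \<xi> n \<omega> = -1}) = p + (1-p)"
      using assms(7,8)[OF that]
      by (subst finite_measure_Union) (use meas in auto)
    finally show ?thesis using d prob_space by simp
  qed
  define N where "N = (\<Union>J. E J) \<union> (\<Union>n\<in>{1..}. F n)"
  have Nnull: "N \<in> null_sets M"
  proof -
    have "E J \<in> null_sets M" for J using Eev[of J] E0[of J] by (simp add: null_sets_def emeasure_eq_measure)
    moreover have "F n \<in> null_sets M" if "n \<in> {1..}" for n
      using Fev[of n] F0[of n] that by (simp add: null_sets_def emeasure_eq_measure)
    ultimately show ?thesis unfolding N_def
      by (intro null_sets.Un null_sets_UN null_sets_UN') auto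
  qed
  show ?thesis
  proof (rule AE_I'[OF Nnull], safe)
    fix \<omega> k assume \<omega>: "\<omega> \<in> space M" and notN: "\<omega> \<notin> N" and k: "ratioY x (\<lambda>n. \<xi> n \<omega>) k \<le> 2"
    have pm: "\<xi> n \<omega> = 1 \<or> \<xi> n \<omega> = -1" if "n \<ge> 1" for n
      using notN \<omega> that by (auto simp: N_def F_def)
    from notN \<omega> have "\<omega> \<notin> E k" by (auto simp: N_def)
    then obtain j where j: "j \<ge> k" "pat j \<omega>" using \<omega> by (auto simp: E_def)
    show "\<exists>n. wealth x (\<lambda>n. \<xi> n \<omega>) n \<le> 0"
      by (rule bankrupt[where m="3*j+1", OF pm k]) (use j in \<open>auto simp: pat_def numeral_eq_Suc\<close>)
  qed
qed
end
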